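(* The monoid $\operatorname{NDPF}^{(1)}_N$ is $\mathcal{J}$-trivial.
   Context: $\operatorname{NDPF}^{(1)}_N$ is the set of functions $f:\mathbb{Z}\to\mathbb{Z}$ that are regressive ($f(i)\le i$), order preserving and skew periodic ($f(i+N)=f(i)+N$), excluding the shift functions $i\mapsto i-t$ with $t\ne 0$, a monoid under composition. A monoid $M$ is $\mathcal J$-trivial if for $f,g\in M$, $MfM=MgM$ implies $f=g$. *)

theory Defs
  imports Main
begin

definition NDPF1 :: "int \<Rightarrow> (int \<Rightarrow> int) set" where
  "NDPF1 N = {f. (\<forall>i. f i \<le> i) \<and> mono f \<and> (\<forall>i. f (i + N) = f i + N)
                 \<and> \<not> (\<exists>t. t \<noteq> 0 \<and> f = (\<lambda>i. i - t))}"

definition two_sided_ideal :: "('a \<Rightarrow> 'a) set \<Rightarrow> ('a \<Rightarrow> 'a) \<Rightarrow> ('a \<Rightarrow> 'a) set" where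
  "two_sided_ideal M f = {a \<circ> f \<circ> b | a b. a \<in> M \<and> b \<in> M}"

definition J_trivial :: "('a \<Rightarrow> 'a) set \<Rightarrow> bool" where
  "J_trivial M \<longleftrightarrow> (\<forall>f\<in>M. \<forall>g\<in>M. two_sided_ideal M f = two_sided_ideal M g \<longrightarrow> f = g)"

end

theory Submission
  imports Defs
begin

lemma id_in: "id \<in> NDPF1 N"
proof -
  have "\<not> (\<exists>t. t \<noteq> 0 \<and> id = (\<lambda>i::int. i - t))"
  proof
    assume "\<exists>t. t \<noteq> 0 \<and> id = (\<lambda>i::int. i - t)"
    then obtain t :: int where "t \<noteq> 0" "id = (\<lambda>i::int. i - t)" by blast
    then have "id (0::int) = 0 - t" by metis
    with \<open>t \<noteq> 0\<close> show False by simp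
  qed
  then show ?thesis unfolding NDPF1_def by (auto simp: mono_def)
qed

lemma le_lemma:
  assumes "a \<in> NDPF1 N" "g \<in> NDPF1 N" "b \<in> NDPF1 N"
  shows "(a \<circ> g \<circ> b) i \<le> g i"
proof -
  have "a (g (b i)) \<le> g (b i)" using assms(1) unfolding NDPF1_def by auto
  moreover have "g (b i) \<le> g i" using assms(2,3) unfolding NDPF1_def by (auto simp: mono_def)
  ultimately show ?thesis by simp
qed

theorem mainTheorem7:
  fixes N :: int
  assumes "N \<ge> 1"
  shows "J_trivial (NDPF1 N)"
  unfolding J_trivial_def
proof (intro ballI impI)
  fix f g assume f: "f \<in> NDPF1 N" and g: "g \<in> NDPF1 N"
    and eq: "two_sided_ideal (NDPF1 N) f = two_sided_ideal (NDPF1 N) g"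
  have "f = id \<circ> f \<circ> id" by simp
  hence "f \<in> two_sided_ideal (NDPF1 N) f" unfolding two_sided_ideal_def using id_in by blast
  hence "f \<in> two_sided_ideal (NDPF1 N) g" using eq by simp
  then obtain a b where ab: "a \<in> NDPF1 N" "b \<in> NDPF1 N" "f = a \<circ> g \<circ> b"
    unfolding two_sided_ideal_def by blast
  have "g = id \<circ> g \<circ> id" by simp
  hence "g \<in> two_sided_ideal (NDPF1 N) g" unfolding two_sided_ideal_def using id_in by blast
  hence "g \<in> two_sided_ideal (NDPF1 N) f" using eq by simp
  then obtain c d where cd: "c \<in> NDPF1 N" "d \<in> NDPF1 N" "g = c \<circ> f \<circ> d"
    unfolding two_sided_ideal_def by blast
  show "f = g"
  proof
    fix i
    have "f i \<le> g i" using le_lemma[OF ab(1) g ab(2)] ab(3) by simp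
    moreover have "g i \<le> f i" using le_lemma[OF cd(1) f cd(2)] cd(3) by simp
    ultimately show "f i = g i" by simp
  qed
qed

end
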